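(* (1) Two distinct seeds $\phi,\psi$ are neighbors if and only if $parent(\psi)=\phi$ or $parent(\phi)=\psi$. (2) If $\phi=parent(\psi)$, then $perms(\phi)\cap perms(\psi)=cycle(\widetilde\psi)$, and there is $i\in\{1,\dots,n-3\}$ with $\psi=son(\phi,i)$ (i.e. $\sigma^i(\phi^{(i)})=\widetilde\psi$); if moreover $height(\phi)=k<n-3$ then $height(\psi)=\Delta(k,i)$. (3) For every seed $\phi$ with $height(\phi)>1$ and every $i\in\{1,\dots,n-3\}$ there exists a seed $\beta$ with $son(\phi,i)=\beta$.
   Context: Fix an integer $n\ge 5$. An $n$-permutation is a sequence $(a_1,\dots,a_n)$ of the distinct elements of $\{1,\dots,n\}$. For $\pi=(a_1,\dots,a_n)$ put $\sigma(\pi)=(a_2,\dots,a_n,a_1)$ and $\tau(\pi)=(a_2,a_1,a_3,\dots,a_n)$; $cycle(\pi)$ denotes the set of the $n$ cyclic rotations of $\pi$; $\sigma^i$ is $\sigma$ applied $i$ times. On $\{1,\dots,n-1\}$ let $a\oplus 1=a+1$ for $a<n-1$ and $(n-1)\oplus 1=1$; $a\ominus 1$ is the unique $b$ with $b\oplus 1=a$, and $a\oplus j$, $a\ominus j$ denote $j$-fold iterates. A seed is an $(n-1)$-tuple $\psi=(a_1,\dots,a_{n-1})$ of distinct elements of $\{1,\dots,n\}$ with $a_1=n$ and $a_2\oplus1\notin\{a_1,\dots,a_{n-1}\}$; its missing element is $mis(\psi)=a_2\oplus 1$. The package $perms(\psi)$ is the set of all $n$-permutations obtained from $\psi$ by inserting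 $mis(\psi)$ at any position and then applying any cyclic rotation. Seeds $\phi,\psi$ are neighbors if $perms(\phi)\cap perms(\psi)\neq\emptyset$. For a seed $\psi=(a_1,\dots,a_{n-1})$ with $x=mis(\psi)$: $height(\psi)$ is the largest $k\in\{1,\dots,n-2\}$ such that $a_i=a_{i+1}\oplus 1$ for all $2\le i\le k$; $\widetilde\psi=(a_1,x,a_2,\dots,a_{n-1})$; and for $1\le i\le n-1$, $\psi^{(i)}=(x,c_1,\dots,c_{n-1})$ where $(c_1,\dots,c_{n-1})$ is $\psi$ cyclically rotated to the right by $i-1$ positions (so $\psi^{(1)}=(x,a_1,\dots,a_{n-1})$ and $\psi^{(n-1)}=(x,a_2,\dots,a_{n-1},a_1)$). For distinct neighboring seeds $\beta,\psi$ we write $parent(\beta)=\psi$ if $height(\psi)>1$ and $mis(\psi)=mis(\beta)\oplus 1$; if moreover $\sigma^i(\psi^{(i)})=\widetilde\beta$ we write $son(\psi,i)=\beta$ ($\beta$ is the $i$-th son of $\psi$). $\Delta(k,i)=\min(k-1,n-2-i)$. *)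

theory Defs
  imports Main
begin

text \<open>Lists of naturals represent tuples; index 1-based positions a_i as xs ! (i-1).
  sigma is rotate1, sigma^i is rotate i.\<close>

definition oplus :: "nat \<Rightarrow> nat \<Rightarrow> nat" where
  "oplus n a = (if a < n - 1 then a + 1 else 1)"

definition is_perm :: "nat \<Rightarrow> nat list \<Rightarrow> bool" where
  "is_perm n p \<longleftrightarrow> length p = n \<and> distinct p \<and> set p = {1..n}"

definition cycle :: "nat list \<Rightarrow> nat list set" where
  "cycle p = {rotate j p | j. j < length p}"

definition seed :: "nat \<Rightarrow> nat list \<Rightarrow> bool" where
  "seed n \<psi> \<longleftrightarrow> length \<psi> = n - 1 \<and> distinct \<psi> \<and> set \<psi> \<subseteq> {1..n}
      \<and> \<psi> ! 0 = n \<and> oplus n (\<psi> ! 1) \<notin> set \<psi>"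

definition mis :: "nat \<Rightarrow> nat list \<Rightarrow> nat" where
  "mis n \<psi> = oplus n (\<psi> ! 1)"

definition perms :: "nat \<Rightarrow> nat list \<Rightarrow> nat list set" where
  "perms n \<psi> = {rotate j (take p \<psi> @ mis n \<psi> # drop p \<psi>) | j p. j < n \<and> p \<le> length \<psi>}"

definition neighbors :: "nat \<Rightarrow> nat list \<Rightarrow> nat list \<Rightarrow> bool" where
  "neighbors n \<phi> \<psi> \<longleftrightarrow> seed n \<phi> \<and> seed n \<psi> \<and> perms n \<phi> \<inter> perms n \<psi> \<noteq> {}"

definition height :: "nat \<Rightarrow> nat list \<Rightarrow> nat" where
  "height n \<psi> = (GREATEST k. k \<in> {1..n-2} \<and>
      (\<forall>i. 2 \<le> i \<and> i \<le> k \<longrightarrow> \<psi> ! (i - 1) = oplus n (\<psi> ! i)))"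

definition tilde :: "nat \<Rightarrow> nat list \<Rightarrow> nat list" where
  "tilde n \<psi> = hd \<psi> # mis n \<psi> # tl \<psi>"

text \<open>psi^(i): mis followed by psi rotated to the right by i-1 positions
  (= rotated left by length - (i-1), for 1 <= i <= n-1).\<close>
definition supi :: "nat \<Rightarrow> nat list \<Rightarrow> nat \<Rightarrow> nat list" where
  "supi n \<psi> i = mis n \<psi> # rotate (length \<psi> - (i - 1)) \<psi>"

text \<open>is_parent n psi beta means parent(beta) = psi.\<close>
definition is_parent :: "nat \<Rightarrow> nat list \<Rightarrow> nat list \<Rightarrow> bool" where
  "is_parent n \<psi> \<beta> \<longleftrightarrow> \<psi> \<noteq> \<beta> \<and> neighbors n \<beta> \<psi> \<and> height n \<psi> > 1
      \<and> mis n \<psi> = oplus n (mis n \<beta>)"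

definition is_son :: "nat \<Rightarrow> nat list \<Rightarrow> nat \<Rightarrow> nat list \<Rightarrow> bool" where
  "is_son n \<psi> i \<beta> \<longleftrightarrow> is_parent n \<psi> \<beta> \<and> rotate i (supi n \<psi> i) = tilde n \<beta>"

definition Delta :: "nat \<Rightarrow> nat \<Rightarrow> nat \<Rightarrow> nat" where
  "Delta n k i = min (k - 1) (n - 2 - i)"

end

theory Submission
  imports Defs
begin

definition ins :: "nat \<Rightarrow> nat \<Rightarrow> nat list \<Rightarrow> nat list" where
  "ins p a l = take p l @ a # drop p l"

definition chain :: "nat \<Rightarrow> nat list \<Rightarrow> nat \<Rightarrow> bool" where
  "chain n l k \<longleftrightarrow> (\<forall>i. 2 \<le> i \<and> i \<le> k \<longrightarrow> l ! (i - 1) = oplus n (l ! i))"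

lemma height_chain: "height n l = (GREATEST k. k \<in> {1..n-2} \<and> chain n l k)"
  unfolding height_def chain_def by simp

lemma ins_nth_lt: "m < p \<Longrightarrow> p \<le> length l \<Longrightarrow> ins p a l ! m = l ! m"
  unfolding ins_def by (simp add: nth_append)

lemma ins_nth_eq: "p \<le> length l \<Longrightarrow> ins p a l ! p = a"
  unfolding ins_def by (simp add: nth_append)

lemma ins_nth_gt: "p < m \<Longrightarrow> m \<le> length l \<Longrightarrow> ins p a l ! m = l ! (m - 1)"
  unfolding ins_def by (simp add: nth_append min_def)

lemma ins_len: "p \<le> length l \<Longrightarrow> length (ins p a l) = Suc (length l)"
  unfolding ins_def by simp

lemma ins_set: "set (ins p a l) = insert a (set l)"
  unfolding ins_def by (metis Un_insert_right append_take_drop_id list.simps(15) set_append)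

lemma ins_distinct: "distinct l \<Longrightarrow> a \<notin> set l \<Longrightarrow> distinct (ins p a l)"
  unfolding ins_def
  unfolding ins_def using set_take_disj_set_drop_if_distinct[of l p p] by (auto dest: in_set_takeD in_set_dropD)

lemma ins_remove: "a \<notin> set l \<Longrightarrow> removeAll a (ins p a l) = l"
  unfolding ins_def
  unfolding ins_def by (metis append_take_drop_id in_set_dropD in_set_takeD removeAll.simps(2) removeAll_append removeAll_id)

lemma oplus_range: "n \<ge> 2 \<Longrightarrow> 1 \<le> oplus n a \<and> oplus n a \<le> n - 1"
  unfolding oplus_def by auto

lemma funpow_oplus: "n \<ge> 2 \<Longrightarrow> 1 \<le> a \<Longrightarrow> a \<le> n - 1 \<Longrightarrow>
   (oplus n ^^ j) a = (a - 1 + j) mod (n - 1) + 1"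
proof (induction j)
  case 0 then show ?case by simp
next
  case (Suc j)
  define r where "r = (a - 1 + j) mod (n - 1)"
  have r: "r < n - 1" using Suc.prems unfolding r_def by simp
  have "(oplus n ^^ Suc j) a = oplus n (r + 1)" using Suc by (simp add: r_def)
  also have "\<dots> = (r + 1) mod (n - 1) + 1"
  proof -
    have "r + 1 < n - 1 \<or> r + 1 = n - 1" using r by linarith
    then show ?thesis unfolding oplus_def by auto
  qed
  also have "(r + 1) mod (n - 1) = (a - 1 + Suc j) mod (n - 1)" unfolding r_def
    by (simp add: mod_Suc_eq)
  finally show ?case .
qed

lemma funpow_ne: "n \<ge> 2 \<Longrightarrow> 1 \<le> a \<Longrightarrow> a \<le> n - 1 \<Longrightarrow> 0 < j \<Longrightarrow> j < n - 1 \<Longrightarrow>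
   (oplus n ^^ j) a \<noteq> a"
proof
  assume h: "n \<ge> 2" "1 \<le> a" "a \<le> n - 1" "0 < j" "j < n - 1" "(oplus n ^^ j) a = a"
  then have e: "(a - 1 + j) mod (n - 1) = a - 1" using funpow_oplus by simp
  show False
  proof (cases "a - 1 + j < n - 1")
    case True then show ?thesis using e h by simp
  next
    case False
    then have "(a - 1 + j) mod (n - 1) = (a - 1 + j - (n - 1)) mod (n - 1)" by (simp add: le_mod_geq)
    also have "\<dots> = a - 1 + j - (n - 1)" using h False by (intro mod_less) linarith
    finally show ?thesis using e h False by linarith
  qed
qed

lemma oplus2: "n \<ge> 4 \<Longrightarrow> 1 \<le> a \<Longrightarrow> a \<le> n - 1 \<Longrightarrow> oplus n (oplus n a) \<noteq> a"
  using funpow_ne[of n a 2] by (simp add: numeral_2_eq_2)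


lemma rot_eq:
  assumes "distinct L1" "length L1 = length L2" "L1 \<noteq> []" "L1 ! 0 = L2 ! 0"
    "rotate j1 L1 = rotate j2 L2"
  shows "L1 = L2"
proof -
  define m where "m = length L1"
  have m: "m > 0" using assms(3) unfolding m_def by simp
  define k where "k = m - j1 mod m"
  have "rotate k (rotate j1 L1) = rotate (k + j1) L1" by (simp add: rotate_rotate)
  also have "(k + j1) mod m = 0"
  proof -
    have "(k + j1) mod m = (k + j1 mod m) mod m" by (simp add: mod_add_right_eq)
    also have "k + j1 mod m = m" unfolding k_def using m by (simp add: less_imp_le)
    finally show ?thesis by simp
  qed
  then have "rotate (k + j1) L1 = L1" using m_def by simp
  finally have e: "L1 = rotate (k + j2) L2" using assms(5) by (metis rotate_rotate)
  define t where "t = (k + j2) mod m"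
  have t: "t < m" using m t_def by simp
  have e2: "L1 = rotate t L2" using e assms(2) unfolding t_def m_def by (metis rotate_conv_mod)
  have "L1 ! 0 = L2 ! t" using e2 t assms(2) m unfolding m_def by (simp add: nth_rotate)
  moreover have "distinct L2" using assms(1) e2 by simp
  moreover have "L2 \<noteq> []" using assms(2,3) by auto
  ultimately have "t = 0" using assms t m unfolding m_def by (metis nth_eq_iff_index_eq)
  then show ?thesis using e2 by simp
qed

lemma seed_facts:
  assumes "seed n \<phi>" "n \<ge> 3"
  shows "length \<phi> = n - 1" "distinct \<phi>" "\<phi> ! 0 = n" "mis n \<phi> \<notin> set \<phi>"
    "1 \<le> mis n \<phi>" "mis n \<phi> \<le> n - 1" "set \<phi> \<subseteq> {1..n}" "\<phi> \<noteq> []"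
  using assms oplus_range[of n] unfolding seed_def mis_def by auto

lemma seed_elem:
  assumes "seed n \<phi>" "n \<ge> 3" "1 \<le> m" "m < n - 1"
  shows "1 \<le> \<phi> ! m" "\<phi> ! m \<le> n - 1"
proof -
  have d: "distinct \<phi>" "length \<phi> = n - 1" "\<phi> ! 0 = n" "set \<phi> \<subseteq> {1..n}"
    using assms unfolding seed_def by auto
  have "\<phi> ! m \<in> set \<phi>" using d assms by simp
  then have a: "\<phi> ! m \<in> {1..n}" using d by auto
  have "\<phi> ! m \<noteq> \<phi> ! 0" using d assms by (subst nth_eq_iff_index_eq) auto
  then show "1 \<le> \<phi> ! m" "\<phi> ! m \<le> n - 1" using a d by auto
qed

lemma norm_perm:
  assumes "seed n \<phi>" "n \<ge> 3" "\<pi> \<in> perms n \<phi>"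
  shows "\<exists>j<n. \<exists>p. 1 \<le> p \<and> p \<le> n - 1 \<and> \<pi> = rotate j (ins p (mis n \<phi>) \<phi>)"
proof -
  have len: "length \<phi> = n - 1" using seed_facts[OF assms(1,2)] by simp
  obtain j p where jp: "j < n" "p \<le> length \<phi>" "\<pi> = rotate j (ins p (mis n \<phi>) \<phi>)"
    using assms(3) unfolding perms_def ins_def by auto
  show ?thesis
  proof (cases "p = 0")
    case False then show ?thesis using jp len by (intro exI[of _ j] conjI exI[of _ p]) auto
  next
    case True
    let ?x = "mis n \<phi>"
    have l: "length (?x # \<phi>) = n" using len assms by simp
    have "ins (n - 1) ?x \<phi> = rotate 1 (?x # \<phi>)" unfolding ins_def using len by simp
    then have "rotate (n - 1) (ins (n - 1) ?x \<phi>) = rotate n (?x # \<phi>)"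
      using assms(2) by (simp only: rotate_rotate, simp)
    also have "\<dots> = ?x # \<phi>" using l by simp
    finally have e: "rotate (n - 1) (ins (n - 1) ?x \<phi>) = ?x # \<phi>" .
    have "\<pi> = rotate j (?x # \<phi>)" using jp True unfolding ins_def by simp
    then have "\<pi> = rotate (j + (n - 1)) (ins (n - 1) ?x \<phi>)"
      using e by (metis rotate_rotate)
    also have "\<dots> = rotate ((j + (n - 1)) mod n) (ins (n - 1) ?x \<phi>)"
      using rotate_conv_mod[of "j + (n - 1)" "ins (n - 1) ?x \<phi>"] ins_len[of "n - 1" \<phi> ?x] len assms by simp
    finally show ?thesis using assms
      by (intro exI[of _ "(j + (n - 1)) mod n"] conjI exI[of _ "n - 1"]) auto
  qed
qed

lemma height_props:
  assumes "n \<ge> 3"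
  shows "1 \<le> height n l" "height n l \<le> n - 2" "chain n l (height n l)"
    "\<And>k. 1 \<le> k \<Longrightarrow> k \<le> n - 2 \<Longrightarrow> chain n l k \<Longrightarrow> k \<le> height n l"
proof -
  have ex: "1 \<in> {1..n-2} \<and> chain n l 1" using assms unfolding chain_def by auto
  have bd: "\<And>y. y \<in> {1..n-2} \<and> chain n l y \<Longrightarrow> y \<le> n - 2" by auto
  have g: "height n l \<in> {1..n-2} \<and> chain n l (height n l)"
    unfolding height_chain by (rule GreatestI_nat[where P="\<lambda>k. k \<in> {1..n-2} \<and> chain n l k", OF ex bd])
  then show "1 \<le> height n l" "height n l \<le> n - 2" "chain n l (height n l)" by auto
  fix k assume k: "1 \<le> k" "k \<le> n - 2" "chain n l k"
  then have "k \<in> {1..n-2} \<and> chain n l k" by simp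
  then show "k \<le> height n l" unfolding height_chain by (rule Greatest_le_nat[where P="\<lambda>k. k \<in> {1..n-2} \<and> chain n l k", OF _ bd])
qed

lemma height_break:
  assumes "n \<ge> 3" "height n l < n - 2"
  shows "l ! (height n l) \<noteq> oplus n (l ! (height n l + 1))"
proof
  assume a: "l ! (height n l) = oplus n (l ! (height n l + 1))"
  have c: "chain n l (height n l)" using height_props(3)[OF assms(1), of l] .
  have "chain n l (height n l + 1)" unfolding chain_def
  proof (intro allI impI)
    fix i assume i: "2 \<le> i \<and> i \<le> height n l + 1"
    show "l ! (i - 1) = oplus n (l ! i)"
    proof (cases "i = height n l + 1")
      case True then show ?thesis using a by simp
    next
      case False then show ?thesis using c i unfolding chain_def by simp
    qed
  qed
  then have "height n l + 1 \<le> height n l" using height_props(4)[OF assms(1)] assms by simp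
  then show False by simp
qed

lemma height_eq:
  assumes "n \<ge> 3" "1 \<le> k" "k \<le> n - 2" "chain n l k"
    "k < n - 2 \<Longrightarrow> l ! k \<noteq> oplus n (l ! (k + 1))"
  shows "height n l = k"
proof -
  have "k \<le> height n l" using height_props(4)[OF assms(1) assms(2-4)] .
  moreover have "\<not> k < height n l"
  proof
    assume "k < height n l"
    then have i: "2 \<le> k + 1 \<and> k + 1 \<le> height n l" using assms(2) by simp
    have "l ! (k + 1 - 1) = oplus n (l ! (k + 1))"
      using height_props(3)[OF assms(1), of l] i unfolding chain_def by blast
    then have "l ! k = oplus n (l ! (k + 1))" by simp
    moreover have "k < n - 2" using \<open>k < height n l\<close> height_props(2)[OF assms(1), of l] by simp
    ultimately show False using assms(5) by simp
  qed
  ultimately show ?thesis by simp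
qed

lemma chain_funpow:
  assumes "chain n l k" "1 \<le> m" "m \<le> k"
  shows "l ! 1 = (oplus n ^^ (m - 1)) (l ! m)"
  using assms(2,3)
proof (induction m rule: nat_induct_at_least)
  case base then show ?case by simp
next
  case (Suc m)
  have i: "2 \<le> Suc m \<and> Suc m \<le> k" using Suc by simp
  have "l ! (Suc m - 1) = oplus n (l ! Suc m)" using assms(1) i unfolding chain_def by blast
  then have "l ! m = oplus n (l ! Suc m)" by simp
  moreover obtain m' where m': "m = Suc m'" using Suc(1) by (cases m) auto
  moreover have "(oplus n ^^ m) (l ! Suc m) = (oplus n ^^ m') (oplus n (l ! Suc m))"
    unfolding m' funpow_Suc_right by simp
  ultimately show ?case using Suc by simp
qed


lemma in_perms: "p \<le> length \<phi> \<Longrightarrow> j < n \<Longrightarrow> rotate j (ins p (mis n \<phi>) \<phi>) \<in> perms n \<phi>"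
  unfolding perms_def ins_def by blast

lemma ins1_tilde: "\<psi> \<noteq> [] \<Longrightarrow> ins 1 (mis n \<psi>) \<psi> = tilde n \<psi>"
  by (cases \<psi>) (auto simp: ins_def tilde_def)

lemma list2: "length C \<ge> 2 \<Longrightarrow> C = C ! 0 # C ! 1 # drop 2 C"
  by (cases C; cases "tl C") auto

lemma rot_supi:
  assumes "length l = n - 1" "1 \<le> i" "i \<le> n - 1"
  shows "rotate i (supi n l i) = ins (n - i) (mis n l) l"
proof -
  let ?y = "mis n l"
  let ?q = "n - i"
  have q: "?q = length l - (i - 1)" using assms by simp
  have R: "rotate (length l - (i - 1)) l = drop ?q l @ take ?q l"
  proof (cases "i = 1")
    case True then show ?thesis using assms by simp
  next
    case False
    then have "?q < length l" using assms by simp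
    then show ?thesis using q by (simp add: rotate_drop_take)
  qed
  have ld: "length (drop ?q l) = i - 1" using assms by simp
  have "rotate i (supi n l i) = rotate i (?y # drop ?q l @ take ?q l)"
    unfolding supi_def using R by simp
  also have "\<dots> = rotate (i - 1) (drop ?q l @ take ?q l @ [?y])"
    using rotate_rotate[of "i - 1" 1 "?y # drop ?q l @ take ?q l"] assms(2) by simp
  also have "\<dots> = take ?q l @ [?y] @ drop ?q l"
    using ld rotate_append[of "drop ?q l" "take ?q l @ [?y]"] by simp
  finally show ?thesis unfolding ins_def by simp
qed



lemma common_C:
  assumes "n \<ge> 5" "neighbors n \<phi> \<psi>"
  shows "\<exists>p1 p2. 1 \<le> p1 \<and> p1 \<le> n - 1 \<and> 1 \<le> p2 \<and> p2 \<le> n - 1 \<and>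
     ins p1 (mis n \<phi>) \<phi> = ins p2 (mis n \<psi>) \<psi>"
proof -
  have s: "seed n \<phi>" "seed n \<psi>" and ne: "perms n \<phi> \<inter> perms n \<psi> \<noteq> {}"
    using assms unfolding neighbors_def by auto
  then obtain \<pi> where pi: "\<pi> \<in> perms n \<phi>" "\<pi> \<in> perms n \<psi>" by blast
  have n3: "n \<ge> 3" using assms by simp
  obtain j1 p1 where a1: "1 \<le> p1" "p1 \<le> n - 1" "\<pi> = rotate j1 (ins p1 (mis n \<phi>) \<phi>)"
    using norm_perm[OF s(1) n3 pi(1)] by blast
  obtain j2 p2 where a2: "1 \<le> p2" "p2 \<le> n - 1" "\<pi> = rotate j2 (ins p2 (mis n \<psi>) \<psi>)"
    using norm_perm[OF s(2) n3 pi(2)] by blast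
  note f1 = seed_facts[OF s(1) n3] and f2 = seed_facts[OF s(2) n3]
  have "ins p1 (mis n \<phi>) \<phi> = ins p2 (mis n \<psi>) \<psi>"
  proof (rule rot_eq)
    show "distinct (ins p1 (mis n \<phi>) \<phi>)" using f1 ins_distinct by simp
    show "length (ins p1 (mis n \<phi>) \<phi>) = length (ins p2 (mis n \<psi>) \<psi>)"
      using f1 f2 a1 a2 by (simp add: ins_len)
    show "ins p1 (mis n \<phi>) \<phi> \<noteq> []" unfolding ins_def by simp
    have "ins p1 (mis n \<phi>) \<phi> ! 0 = \<phi> ! 0" using f1 a1 by (intro ins_nth_lt) auto
    moreover have "ins p2 (mis n \<psi>) \<psi> ! 0 = \<psi> ! 0" using f2 a2 by (intro ins_nth_lt) auto
    ultimately show "ins p1 (mis n \<phi>) \<phi> ! 0 = ins p2 (mis n \<psi>) \<psi> ! 0" using f1 f2 by simp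
    show "rotate j1 (ins p1 (mis n \<phi>) \<phi>) = rotate j2 (ins p2 (mis n \<psi>) \<psi>)"
      using a1(3) a2(3) by simp
  qed
  then show ?thesis using a1(1,2) a2(1,2) by blast
qed

lemma C1_cases:
  assumes "n \<ge> 5" "seed n \<phi>" "seed n \<psi>" "1 \<le> p1" "p1 \<le> n - 1" "1 \<le> p2" "p2 \<le> n - 1"
    "ins p1 (mis n \<phi>) \<phi> = C" "ins p2 (mis n \<psi>) \<psi> = C" "mis n \<phi> \<noteq> mis n \<psi>"
  shows "C ! 1 = mis n \<phi> \<or> C ! 1 = mis n \<psi>"
proof (rule ccontr)
  assume a: "\<not> (C ! 1 = mis n \<phi> \<or> C ! 1 = mis n \<psi>)"
  have n3: "n \<ge> 3" using assms by simp
  note f1 = seed_facts[OF assms(2) n3] and f2 = seed_facts[OF assms(3) n3]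
  have "p1 \<noteq> 1"
  proof
    assume "p1 = 1"
    then have "C ! 1 = mis n \<phi>" using assms(8) ins_nth_eq[of 1 \<phi> "mis n \<phi>"] f1 assms(1) by simp
    then show False using a by simp
  qed
  then have "C ! 1 = \<phi> ! 1" using assms(4,5,8) f1 ins_nth_lt[of 1 p1 \<phi>] by auto
  moreover have "p2 \<noteq> 1"
  proof
    assume "p2 = 1"
    then have "C ! 1 = mis n \<psi>" using assms(9) ins_nth_eq[of 1 \<psi> "mis n \<psi>"] f2 assms(1) by simp
    then show False using a by simp
  qed
  then have "C ! 1 = \<psi> ! 1" using assms(6,7,9) f2 ins_nth_lt[of 1 p2 \<psi>] by auto
  ultimately have "mis n \<phi> = mis n \<psi>" unfolding mis_def by simp
  then show False using assms(10) by simp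
qed

lemma core:
  assumes "n \<ge> 5" "seed n \<phi>" "seed n \<psi>" "1 \<le> p1" "p1 \<le> n - 1" "1 \<le> p2" "p2 \<le> n - 1"
    "ins p1 (mis n \<phi>) \<phi> = C" "ins p2 (mis n \<psi>) \<psi> = C" "mis n \<phi> \<noteq> mis n \<psi>"
    "C ! 1 = mis n \<phi>"
  shows "p1 = 1" "p2 \<ge> 3" "\<psi> ! 1 = mis n \<phi>" "\<psi> ! 2 = \<phi> ! 1"
    "mis n \<psi> = oplus n (mis n \<phi>)" "\<psi> ! 1 = oplus n (\<psi> ! 2)"
proof -
  have n3: "n \<ge> 3" using assms by simp
  note f1 = seed_facts[OF assms(2) n3] and f2 = seed_facts[OF assms(3) n3]
  let ?x = "mis n \<phi>" and ?y = "mis n \<psi>"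
  show p1: "p1 = 1"
  proof (rule ccontr)
    assume "p1 \<noteq> 1"
    then have "C ! 1 = \<phi> ! 1" using assms(4,5,8) f1 ins_nth_lt[of 1 p1 \<phi>] by auto
    moreover have "\<phi> ! 1 \<in> set \<phi>" using f1 assms(1) by simp
    ultimately show False using assms(11) f1 by auto
  qed
  have p2a: "p2 \<noteq> 1"
  proof
    assume "p2 = 1"
    then have "C ! 1 = ?y" using assms(9) ins_nth_eq[of 1 \<psi>] f2 assms(1) by auto
    then show False using assms(10,11) by simp
  qed
  then have c1: "C ! 1 = \<psi> ! 1" using assms(6,7,9) f2 ins_nth_lt[of 1 p2 \<psi>] by auto
  then show psi1: "\<psi> ! 1 = ?x" using assms(11) by simp
  then show my: "?y = oplus n ?x" unfolding mis_def by simp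
  have "ins 1 ?x \<phi> ! 2 = \<phi> ! (2 - 1)" by (rule ins_nth_gt) (use f1 assms(1) in auto)
  then have c2: "C ! 2 = \<phi> ! 1" using assms(8) p1 by simp
  have p2b: "p2 \<noteq> 2"
  proof
    assume "p2 = 2"
    then have "C ! 2 = ?y" using assms(9) ins_nth_eq[of 2 \<psi>] f2 assms(1) by auto
    then have "\<phi> ! 1 = ?y" using c2 by simp
    then have "?x = oplus n ?y" unfolding mis_def by simp
    then have "oplus n (oplus n ?x) = ?x" using my by simp
    then show False using oplus2[of n ?x] f1 assms(1) by simp
  qed
  then show "p2 \<ge> 3" using p2a assms(6) by simp
  then have "C ! 2 = \<psi> ! 2" using assms(7,9) f2 ins_nth_lt[of 2 p2 \<psi>] by auto
  then show psi2: "\<psi> ! 2 = \<phi> ! 1" using c2 by simp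
  show "\<psi> ! 1 = oplus n (\<psi> ! 2)" using psi1 psi2 unfolding mis_def by simp
qed


lemma neighbors_sym: "neighbors n \<phi> \<psi> \<Longrightarrow> neighbors n \<psi> \<phi>"
  unfolding neighbors_def by auto

lemma height_gt1:
  assumes "n \<ge> 5" "l ! 1 = oplus n (l ! 2)"
  shows "height n l > 1"
proof -
  have "chain n l 2" unfolding chain_def
  proof (intro allI impI)
    fix i assume "2 \<le> i \<and> i \<le> (2::nat)"
    then have "i = 2" by simp
    then show "l ! (i - 1) = oplus n (l ! i)" using assms(2) by simp
  qed
  then have "2 \<le> height n l" using height_props(4)[of n 2 l] assms(1) by simp
  then show ?thesis by simp
qed

lemma height_chain2:
  assumes "n \<ge> 5" "height n l > 1"
  shows "l ! 1 = oplus n (l ! 2)"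
proof -
  have "chain n l (height n l)" using height_props(3)[of n l] assms(1) by simp
  moreover have "2 \<le> height n l" using assms(2) by simp
  ultimately have "l ! (2 - 1) = oplus n (l ! 2)" unfolding chain_def by blast
  then show ?thesis by simp
qed

lemma same_mis:
  assumes "ins p1 a \<phi> = ins p2 a \<psi>" "a \<notin> set \<phi>" "a \<notin> set \<psi>"
  shows "\<phi> = \<psi>"
proof -
  have "\<phi> = removeAll a (ins p1 a \<phi>)" using ins_remove[OF assms(2)] by simp
  also have "\<dots> = removeAll a (ins p2 a \<psi>)" using assms(1) by simp
  also have "\<dots> = \<psi>" using ins_remove[OF assms(3)] by simp
  finally show ?thesis .
qed

lemma common_pi:
  assumes "n \<ge> 5" "seed n \<phi>" "seed n \<psi>" "\<pi> \<in> perms n \<phi>" "\<pi> \<in> perms n \<psi>"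
  shows "\<exists>j p1 p2. j < n \<and> 1 \<le> p1 \<and> p1 \<le> n - 1 \<and> 1 \<le> p2 \<and> p2 \<le> n - 1 \<and>
     ins p1 (mis n \<phi>) \<phi> = ins p2 (mis n \<psi>) \<psi> \<and> \<pi> = rotate j (ins p1 (mis n \<phi>) \<phi>)"
proof -
  note s = assms(2,3) and pi = assms(4,5)
  have n3: "n \<ge> 3" using assms by simp
  obtain j1 p1 where a1: "j1 < n" "1 \<le> p1" "p1 \<le> n - 1" "\<pi> = rotate j1 (ins p1 (mis n \<phi>) \<phi>)"
    using norm_perm[OF s(1) n3 pi(1)] by blast
  obtain j2 p2 where a2: "1 \<le> p2" "p2 \<le> n - 1" "\<pi> = rotate j2 (ins p2 (mis n \<psi>) \<psi>)"
    using norm_perm[OF s(2) n3 pi(2)] by blast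
  note f1 = seed_facts[OF s(1) n3] and f2 = seed_facts[OF s(2) n3]
  have "ins p1 (mis n \<phi>) \<phi> = ins p2 (mis n \<psi>) \<psi>"
  proof (rule rot_eq)
    show "distinct (ins p1 (mis n \<phi>) \<phi>)" using f1 ins_distinct by simp
    show "length (ins p1 (mis n \<phi>) \<phi>) = length (ins p2 (mis n \<psi>) \<psi>)"
      using f1 f2 a1 a2 by (simp add: ins_len)
    show "ins p1 (mis n \<phi>) \<phi> \<noteq> []" unfolding ins_def by simp
    have "ins p1 (mis n \<phi>) \<phi> ! 0 = \<phi> ! 0" using f1 a1 by (intro ins_nth_lt) auto
    moreover have "ins p2 (mis n \<psi>) \<psi> ! 0 = \<psi> ! 0" using f2 a2 by (intro ins_nth_lt) auto
    ultimately show "ins p1 (mis n \<phi>) \<phi> ! 0 = ins p2 (mis n \<psi>) \<psi> ! 0" using f1 f2 by simp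
    show "rotate j1 (ins p1 (mis n \<phi>) \<phi>) = rotate j2 (ins p2 (mis n \<psi>) \<psi>)"
      using a1(4) a2(3) by simp
  qed
  then show ?thesis using a1 a2(1,2) by (intro exI[of _ j1] exI[of _ p1] exI[of _ p2]) simp
qed

lemma part1:
  assumes "n \<ge> 5" "seed n \<phi>" "seed n \<psi>" "\<phi> \<noteq> \<psi>" "neighbors n \<phi> \<psi>"
  shows "is_parent n \<phi> \<psi> \<or> is_parent n \<psi> \<phi>"
proof -
  have n3: "n \<ge> 3" using assms by simp
  note f1 = seed_facts[OF assms(2) n3] and f2 = seed_facts[OF assms(3) n3]
  obtain p1 p2 where a: "1 \<le> p1" "p1 \<le> n - 1" "1 \<le> p2" "p2 \<le> n - 1"
     "ins p1 (mis n \<phi>) \<phi> = ins p2 (mis n \<psi>) \<psi>"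
    using common_C[OF assms(1,5)] by blast
  define C where "C = ins p1 (mis n \<phi>) \<phi>"
  have C1: "ins p1 (mis n \<phi>) \<phi> = C" and C2: "ins p2 (mis n \<psi>) \<psi> = C" using a C_def by auto
  have ne: "mis n \<phi> \<noteq> mis n \<psi>"
  proof
    assume "mis n \<phi> = mis n \<psi>"
    then have "\<phi> = \<psi>" using same_mis[of p1 "mis n \<phi>" \<phi> p2 \<psi>] a(5) f1 f2 by simp
    then show False using assms(4) by simp
  qed
  have "C ! 1 = mis n \<phi> \<or> C ! 1 = mis n \<psi>"
    using C1_cases[OF assms(1-3) a(1-4) C1 C2 ne] .
  then show ?thesis
  proof
    assume h: "C ! 1 = mis n \<phi>"
    note c = core[OF assms(1-3) a(1-4) C1 C2 ne h]
    have "is_parent n \<psi> \<phi>" unfolding is_parent_def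
      using assms(4,5) c(5) height_gt1[OF assms(1) c(6)] by simp
    then show ?thesis by simp
  next
    assume h: "C ! 1 = mis n \<psi>"
    note c = core[OF assms(1,3,2) a(3,4,1,2) C2 C1 ne[symmetric] h]
    have "is_parent n \<phi> \<psi>" unfolding is_parent_def
      using assms(4) neighbors_sym[OF assms(5)] c(5) height_gt1[OF assms(1) c(6)] by simp
    then show ?thesis by simp
  qed
qed

lemma parentC:
  assumes "n \<ge> 5" "is_parent n \<phi> \<psi>" "1 \<le> q1" "q1 \<le> n - 1" "1 \<le> q2" "q2 \<le> n - 1"
    "ins q1 (mis n \<phi>) \<phi> = C" "ins q2 (mis n \<psi>) \<psi> = C"
  shows "q2 = 1" "q1 \<ge> 3" "\<phi> ! 1 = mis n \<psi>" "\<phi> ! 2 = \<psi> ! 1"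
proof -
  have n3: "n \<ge> 3" using assms by simp
  have s: "seed n \<phi>" "seed n \<psi>" and m: "mis n \<phi> = oplus n (mis n \<psi>)"
    using assms(2) unfolding is_parent_def neighbors_def by simp_all
  note f1 = seed_facts[OF s(1) n3] and f2 = seed_facts[OF s(2) n3]
  have ne: "mis n \<phi> \<noteq> mis n \<psi>"
  proof
    assume e: "mis n \<phi> = mis n \<psi>"
    have "oplus n (mis n \<psi>) \<noteq> mis n \<psi>" using funpow_ne[of n "mis n \<psi>" 1] f2 assms(1) by simp
    then show False using e m by simp
  qed
  have "C ! 1 = mis n \<phi> \<or> C ! 1 = mis n \<psi>"
    using C1_cases[OF assms(1) s assms(3-8) ne] .
  moreover have "C ! 1 \<noteq> mis n \<phi>"
  proof
    assume h: "C ! 1 = mis n \<phi>"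
    note c = core[OF assms(1) s assms(3-8) ne h]
    have "mis n \<psi> = oplus n (mis n \<phi>)" by (rule c(5))
    also have "\<dots> = oplus n (oplus n (mis n \<psi>))" by (simp only: m)
    finally have "oplus n (oplus n (mis n \<psi>)) = mis n \<psi>" by simp
    then show False using oplus2[of n "mis n \<psi>"] f2 assms(1) by simp
  qed
  ultimately have h: "C ! 1 = mis n \<psi>" by simp
  note c = core[OF assms(1) s(2,1) assms(5,6,3,4,8,7) ne[symmetric] h]
  show "q2 = 1" "q1 \<ge> 3" "\<phi> ! 1 = mis n \<psi>" "\<phi> ! 2 = \<psi> ! 1" using c by simp_all
qed


lemma part2:
  assumes n5: "n \<ge> 5" and par: "is_parent n \<phi> \<psi>"
  shows "perms n \<phi> \<inter> perms n \<psi> = cycle (tilde n \<psi>)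
            \<and> (\<exists>i\<in>{1..n-3}. is_son n \<phi> i \<psi>
                 \<and> (height n \<phi> < n - 3 \<longrightarrow> height n \<psi> = Delta n (height n \<phi>) i))"
proof -
  have n3: "n \<ge> 3" using n5 by simp
  have s: "seed n \<phi>" "seed n \<psi>" and m: "mis n \<phi> = oplus n (mis n \<psi>)"
    and nb: "neighbors n \<psi> \<phi>" and hp: "height n \<phi> > 1"
    using par unfolding is_parent_def neighbors_def by simp_all
  note f1 = seed_facts[OF s(1) n3] and f2 = seed_facts[OF s(2) n3]
  obtain p p2 where a: "1 \<le> p" "p \<le> n - 1" "1 \<le> p2" "p2 \<le> n - 1"
     "ins p (mis n \<phi>) \<phi> = ins p2 (mis n \<psi>) \<psi>"
    using common_C[OF n5 neighbors_sym[OF nb]] by blast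
  define C where "C = ins p (mis n \<phi>) \<phi>"
  have C1: "ins p (mis n \<phi>) \<phi> = C" and C2: "ins p2 (mis n \<psi>) \<psi> = C" using a C_def by auto
  note pc = parentC[OF n5 par a(1-4) C1 C2]
  have Ct: "C = tilde n \<psi>" using C2 pc(1) ins1_tilde[OF f2(8)] by simp
  have lenC: "length C = n" unfolding C_def using f1 a(2) ins_len[of p \<phi> "mis n \<phi>"] n5 by simp
  have inter: "perms n \<phi> \<inter> perms n \<psi> = cycle (tilde n \<psi>)"
  proof
    show "perms n \<phi> \<inter> perms n \<psi> \<subseteq> cycle (tilde n \<psi>)"
    proof
      fix \<pi> assume "\<pi> \<in> perms n \<phi> \<inter> perms n \<psi>"
      then obtain j q1 q2 where b: "j < n" "1 \<le> q1" "q1 \<le> n - 1" "1 \<le> q2" "q2 \<le> n - 1"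
        "ins q1 (mis n \<phi>) \<phi> = ins q2 (mis n \<psi>) \<psi>" "\<pi> = rotate j (ins q1 (mis n \<phi>) \<phi>)"
        using common_pi[OF n5 s, of \<pi>] by blast
      have "q2 = 1" using parentC(1)[OF n5 par b(2-5) refl b(6)[symmetric]] .
      then have "ins q1 (mis n \<phi>) \<phi> = tilde n \<psi>" using b(6) ins1_tilde[OF f2(8)] by simp
      then have "\<pi> = rotate j (tilde n \<psi>)" using b(7) by simp
      moreover have "j < length (tilde n \<psi>)" using b(1) lenC Ct by simp
      ultimately show "\<pi> \<in> cycle (tilde n \<psi>)" unfolding cycle_def by blast
    qed
  next
    show "cycle (tilde n \<psi>) \<subseteq> perms n \<phi> \<inter> perms n \<psi>"
    proof
      fix \<pi> assume "\<pi> \<in> cycle (tilde n \<psi>)"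
      then obtain j where j: "j < length (tilde n \<psi>)" "\<pi> = rotate j (tilde n \<psi>)"
        unfolding cycle_def by blast
      have jn: "j < n" using j(1) lenC Ct by simp
      have "rotate j (ins p (mis n \<phi>) \<phi>) \<in> perms n \<phi>"
        by (rule in_perms) (use a(2) f1 jn in auto)
      moreover have "rotate j (ins 1 (mis n \<psi>) \<psi>) \<in> perms n \<psi>"
        by (rule in_perms) (use f2 jn n5 in auto)
      ultimately show "\<pi> \<in> perms n \<phi> \<inter> perms n \<psi>"
        using j(2) C1 Ct ins1_tilde[OF f2(8)] by simp
    qed
  qed
  define i where "i = n - p"
  have p3: "p \<ge> 3" using pc(2) .
  have irange: "i \<in> {1..n-3}" using p3 a(2) n5 unfolding i_def by auto
  have rs: "rotate i (supi n \<phi> i) = tilde n \<psi>"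
  proof -
    have "rotate i (supi n \<phi> i) = ins (n - i) (mis n \<phi>) \<phi>"
      by (rule rot_supi) (use f1 irange n5 in auto)
    also have "n - i = p" unfolding i_def using a(2) n5 by simp
    finally show ?thesis using C1 Ct by simp
  qed
  have son: "is_son n \<phi> i \<psi>" unfolding is_son_def using par rs by simp
  have ht: "height n \<phi> < n - 3 \<Longrightarrow> height n \<psi> = Delta n (height n \<phi>) i"
  proof -
    assume hk: "height n \<phi> < n - 3"
    define k where "k = height n \<phi>"
    have k2: "k \<ge> 2" using hp unfolding k_def by simp
    have kn: "k < n - 3" using hk unfolding k_def by simp
    have chk: "chain n \<phi> k" unfolding k_def using height_props(3)[OF n3] .
    have brk: "\<phi> ! k \<noteq> oplus n (\<phi> ! (k + 1))" unfolding k_def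
      by (rule height_break[OF n3]) (use kn k_def in simp)
    have Cpsi: "C ! (m + 1) = \<psi> ! m" if "1 \<le> m" "m \<le> n - 2" for m
    proof -
      have "ins 1 (mis n \<psi>) \<psi> ! (m + 1) = \<psi> ! (m + 1 - 1)"
        by (rule ins_nth_gt) (use that f2 in auto)
      then show ?thesis using C2 pc(1) by simp
    qed
    have Cphi: "C ! m = \<phi> ! m" if "m < p" for m
      unfolding C_def using ins_nth_lt[of m p \<phi>] that a(2) f1 by simp
    have Cp: "C ! p = mis n \<phi>" unfolding C_def using ins_nth_eq[of p \<phi>] a(2) f1 by simp
    have A: "\<psi> ! m = \<phi> ! (m + 1)" if "1 \<le> m" "m + 1 < p" for m
      using Cpsi[of m] Cphi[of "m + 1"] that a(2) by simp
    have B: "\<psi> ! (p - 1) = mis n \<phi>"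
      using Cpsi[of "p - 1"] Cp p3 a(2) by simp
    have Dl: "Delta n k i = min (k - 1) (p - 2)" unfolding Delta_def i_def using a(2) n5 by simp
    show "height n \<psi> = Delta n (height n \<phi>) i"
    proof (cases "k \<le> p - 2")
      case True
      have "height n \<psi> = k - 1"
      proof (rule height_eq[OF n3])
        show "1 \<le> k - 1" using k2 by simp
        show "k - 1 \<le> n - 2" using kn by simp
        show "chain n \<psi> (k - 1)" unfolding chain_def
        proof (intro allI impI)
          fix j assume j: "2 \<le> j \<and> j \<le> k - 1"
          have "\<psi> ! (j - 1) = \<phi> ! (j - 1 + 1)" by (rule A) (use j True k2 p3 in linarith)+
          then have e1: "\<psi> ! (j - 1) = \<phi> ! j" using j by simp
          have e2: "\<psi> ! j = \<phi> ! (j + 1)" by (rule A) (use j True k2 p3 in linarith)+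
          have jj: "2 \<le> j + 1 \<and> j + 1 \<le> k" using j by linarith
          have e3: "\<phi> ! (j + 1 - 1) = oplus n (\<phi> ! (j + 1))"
            using chk jj unfolding chain_def by blast
          show "\<psi> ! (j - 1) = oplus n (\<psi> ! j)" using e1 e2 e3 by simp
        qed
        show "\<psi> ! (k - 1) \<noteq> oplus n (\<psi> ! (k - 1 + 1))"
        proof -
          have "\<psi> ! (k - 1) = \<phi> ! (k - 1 + 1)" by (rule A) (use True k2 p3 in linarith)+
          then have e1: "\<psi> ! (k - 1) = \<phi> ! k" using k2 by simp
          have "\<psi> ! k = \<phi> ! (k + 1)" by (rule A) (use True k2 p3 in linarith)+
          then have e2: "\<psi> ! (k - 1 + 1) = \<phi> ! (k + 1)" using k2 by simp
          show ?thesis using e1 e2 brk by simp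
        qed
      qed
      moreover have "Delta n k i = k - 1" using Dl True k2 by simp
      ultimately show ?thesis unfolding k_def by simp
    next
      case False
      have "height n \<psi> = p - 2"
      proof (rule height_eq[OF n3])
        show "1 \<le> p - 2" using p3 by simp
        show "p - 2 \<le> n - 2" using a(2) by simp
        show "chain n \<psi> (p - 2)" unfolding chain_def
        proof (intro allI impI)
          fix j assume j: "2 \<le> j \<and> j \<le> p - 2"
          have "\<psi> ! (j - 1) = \<phi> ! (j - 1 + 1)" by (rule A) (use j p3 in linarith)+
          then have e1: "\<psi> ! (j - 1) = \<phi> ! j" using j by simp
          have e2: "\<psi> ! j = \<phi> ! (j + 1)" by (rule A) (use j p3 in linarith)+
          have jj: "2 \<le> j + 1 \<and> j + 1 \<le> k" using j False by linarith
          have e3: "\<phi> ! (j + 1 - 1) = oplus n (\<phi> ! (j + 1))"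
            using chk jj unfolding chain_def by blast
          show "\<psi> ! (j - 1) = oplus n (\<psi> ! j)" using e1 e2 e3 by simp
        qed
        show "\<psi> ! (p - 2) \<noteq> oplus n (\<psi> ! (p - 2 + 1))"
        proof
          assume e: "\<psi> ! (p - 2) = oplus n (\<psi> ! (p - 2 + 1))"
          have "\<psi> ! (p - 2) = \<phi> ! (p - 2 + 1)" by (rule A) (use p3 in linarith)+
          moreover have pp: "p - 2 + 1 = p - 1" using p3 by linarith
          ultimately have e1: "\<psi> ! (p - 2) = \<phi> ! (p - 1)" by simp
          have e2: "\<psi> ! (p - 2 + 1) = mis n \<phi>" using B pp by simp
          have e3: "\<phi> ! (p - 1) = oplus n (mis n \<phi>)" using e e1 e2 by simp
          let ?x = "mis n \<psi>" and ?g = "oplus n"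
          have "\<phi> ! 1 = (?g ^^ (p - 1 - 1)) (\<phi> ! (p - 1))"
            by (rule chain_funpow[OF chk]) (use p3 False in auto)
          then have e4: "?x = (?g ^^ (p - 2)) (?g (?g ?x))" using e3 m pc(3) by (simp add: numeral_2_eq_2)
          define q where "q = p - 2"
          have q: "p = Suc (Suc q)" using p3 unfolding q_def by linarith
          have "(?g ^^ p) ?x = (?g ^^ (p - 2)) (?g (?g ?x))"
            unfolding q by (simp only: funpow_Suc_right comp_apply) simp
          then have "(?g ^^ p) ?x = ?x" using e4 by simp
          moreover have "p < n - 1" using False kn by simp
          ultimately show False using funpow_ne[of n ?x p] f2 n5 p3 by simp
        qed
      qed
      moreover have "Delta n k i = p - 2" using Dl False by simp
      ultimately show ?thesis unfolding k_def by simp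
    qed
  qed
  show ?thesis using inter irange son ht by blast
qed


lemma part3:
  assumes n5: "n \<ge> 5" and s: "seed n \<phi>" and hp: "height n \<phi> > 1" and i: "i \<in> {1..n-3}"
  shows "\<exists>\<beta>. seed n \<beta> \<and> is_son n \<phi> i \<beta>"
proof -
  have n3: "n \<ge> 3" using n5 by simp
  note f1 = seed_facts[OF s n3]
  define p where "p = n - i"
  have p: "3 \<le> p" "p \<le> n - 1" using i n5 unfolding p_def by auto
  define x where "x = \<phi> ! 1"
  define y where "y = mis n \<phi>"
  have y: "y = oplus n x" unfolding x_def y_def mis_def ..
  have x2: "x = oplus n (\<phi> ! 2)" unfolding x_def using height_chain2[OF n5 hp] .
  define C where "C = ins p y \<phi>"
  have lenC: "length C = n" unfolding C_def using ins_len[of p \<phi> y] p f1 n5 by simp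
  have C0: "C ! 0 = n" unfolding C_def using ins_nth_lt[of 0 p \<phi> y] p f1 by simp
  have C1: "C ! 1 = x" unfolding C_def x_def using ins_nth_lt[of 1 p \<phi> y] p f1 by simp
  have C2: "C ! 2 = \<phi> ! 2" unfolding C_def using ins_nth_lt[of 2 p \<phi> y] p f1 by simp
  have dC: "distinct C" unfolding C_def y_def using ins_distinct f1 by simp
  have sC: "set C = insert y (set \<phi>)" unfolding C_def using ins_set .
  define r where "r = drop 2 C"
  have Cr: "C = n # x # r" using list2[of C] lenC n5 C0 C1 unfolding r_def by simp
  define \<beta> where "\<beta> = n # r"
  have dr: "n \<notin> set r" "x \<notin> set r" "n \<noteq> x" "distinct r" using dC Cr by auto
  have yr: "y \<in> {1..n}" using f1 unfolding y_def by simp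
  have seedb: "seed n \<beta>" unfolding seed_def
  proof (intro conjI)
    show "length \<beta> = n - 1" unfolding \<beta>_def r_def using lenC n5 by simp
    show "distinct \<beta>" unfolding \<beta>_def using dr by simp
    have "set r \<subseteq> set C" using Cr by auto
    then show "set \<beta> \<subseteq> {1..n}" unfolding \<beta>_def using sC yr f1 n5 by auto
    show "\<beta> ! 0 = n" unfolding \<beta>_def by simp
    have "\<beta> ! 1 = \<phi> ! 2" unfolding \<beta>_def r_def using C2 lenC n5 by simp
    then show "oplus n (\<beta> ! 1) \<notin> set \<beta>" using x2 dr unfolding \<beta>_def by simp
  qed
  have mb: "mis n \<beta> = x"
  proof -
    have "\<beta> ! 1 = \<phi> ! 2" unfolding \<beta>_def r_def using C2 lenC n5 by simp
    then show ?thesis unfolding mis_def using x2 by simp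
  qed
  have tb: "tilde n \<beta> = C" unfolding tilde_def mb using Cr \<beta>_def by simp
  have rs: "rotate i (supi n \<phi> i) = tilde n \<beta>"
  proof -
    have "rotate i (supi n \<phi> i) = ins (n - i) (mis n \<phi>) \<phi>"
      by (rule rot_supi) (use f1 i n5 in auto)
    then show ?thesis using tb unfolding C_def p_def y_def by simp
  qed
  have "C \<in> perms n \<phi>"
    using in_perms[of p \<phi> 0 n] p f1 n5 unfolding C_def y_def by simp
  moreover have "C \<in> perms n \<beta>"
  proof -
    have "rotate 0 (ins 1 (mis n \<beta>) \<beta>) \<in> perms n \<beta>"
      by (rule in_perms) (use n5 in \<open>auto simp: \<beta>_def\<close>)
    then show ?thesis using ins1_tilde[of \<beta> n] tb unfolding \<beta>_def by simp
  qed
  ultimately have nb: "neighbors n \<beta> \<phi>" unfolding neighbors_def using seedb s by auto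
  have ne: "\<phi> \<noteq> \<beta>"
  proof
    assume "\<phi> = \<beta>"
    moreover have "x \<in> set \<phi>" unfolding x_def using f1 n5 by simp
    ultimately show False using dr unfolding \<beta>_def by simp
  qed
  have "is_parent n \<phi> \<beta>" unfolding is_parent_def using ne nb hp mb y y_def by simp
  then have "is_son n \<phi> i \<beta>" unfolding is_son_def using rs by simp
  then show ?thesis using seedb by blast
qed

theorem mainTheorem3:
  fixes n :: nat
  assumes "n \<ge> 5"
  shows "(\<forall>\<phi> \<psi>. seed n \<phi> \<and> seed n \<psi> \<and> \<phi> \<noteq> \<psi> \<longrightarrow>
            (neighbors n \<phi> \<psi> \<longleftrightarrow> is_parent n \<phi> \<psi> \<or> is_parent n \<psi> \<phi>))
       \<and> (\<forall>\<phi> \<psi>. is_parent n \<phi> \<psi> \<longrightarrow>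
            perms n \<phi> \<inter> perms n \<psi> = cycle (tilde n \<psi>)
            \<and> (\<exists>i\<in>{1..n-3}. is_son n \<phi> i \<psi>
                 \<and> (height n \<phi> < n - 3 \<longrightarrow> height n \<psi> = Delta n (height n \<phi>) i)))
       \<and> (\<forall>\<phi> i. seed n \<phi> \<and> height n \<phi> > 1 \<and> i \<in> {1..n-3} \<longrightarrow>
            (\<exists>\<beta>. seed n \<beta> \<and> is_son n \<phi> i \<beta>))"
proof (intro conjI allI impI)
  fix \<phi> \<psi> assume h: "seed n \<phi> \<and> seed n \<psi> \<and> \<phi> \<noteq> \<psi>"
  show "neighbors n \<phi> \<psi> \<longleftrightarrow> is_parent n \<phi> \<psi> \<or> is_parent n \<psi> \<phi>"
  proof
    assume "neighbors n \<phi> \<psi>"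
    then show "is_parent n \<phi> \<psi> \<or> is_parent n \<psi> \<phi>" using part1[OF assms] h by blast
  next
    assume "is_parent n \<phi> \<psi> \<or> is_parent n \<psi> \<phi>"
    then show "neighbors n \<phi> \<psi>" unfolding is_parent_def using neighbors_sym by blast
  qed
next
  fix \<phi> \<psi> assume "is_parent n \<phi> \<psi>"
  note q = part2[OF assms this]
  show "perms n \<phi> \<inter> perms n \<psi> = cycle (tilde n \<psi>)" using q by blast
  show "\<exists>i\<in>{1..n-3}. is_son n \<phi> i \<psi>
                 \<and> (height n \<phi> < n - 3 \<longrightarrow> height n \<psi> = Delta n (height n \<phi>) i)" using q by blast
next
  fix \<phi> i assume "seed n \<phi> \<and> height n \<phi> > 1 \<and> i \<in> {1..n-3}"
  then show "\<exists>\<beta>. seed n \<beta> \<and> is_son n \<phi> i \<beta>" using part3[OF assms] by blast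
qed

end
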